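(* Let $[a,b]\subset\mathbb{R}$ be a compact interval, let $m\geq1$, $r\geq2$, $n\geq0$ be integers, let $0<\alpha\leq1$, and let $\varepsilon_0>0$. For each $\varepsilon\in[0,\varepsilon_0)$ let $A_{r-j}(\cdot,\varepsilon)\in(C^{n,\alpha})^{m\times m}$ for $j=1,\dots,r$, and let $L(\varepsilon):(C^{n+r,\alpha})^{m}\to(C^{n,\alpha})^{m}$ be the continuous linear operator $L(\varepsilon)y:=y^{(r)}+\sum_{j=1}^{r}A_{r-j}(\cdot,\varepsilon)y^{(r-j)}$. Then the following three conditions are equivalent: (I) $A_{r-j}(\cdot,\varepsilon)\to A_{r-j}(\cdot,0)$ in $(C^{n,\alpha})^{m\times m}$ as $\varepsilon\to0+$ for each $j\in\{1,\dots,r\}$; (c1) $\|L(\varepsilon)-L(0)\|\to0$ as $\varepsilon\to0+$, where $\|\cdot\|$ is the operator norm for operators $(C^{n+r,\alpha})^{m}\to(C^{n,\alpha})^{m}$; (c2) $L(\varepsilon)y\to L(0)y$ in $(C^{n,\alpha})^{m}$ as $\varepsilon\to0+$ for every $y\in(C^{n+r,\alpha})^{m}$.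
   Context: $C^{n,\alpha}$ denotes the complex Hölder space of all $n$ times continuously differentiable functions $x:[a,b]\to\mathbb{C}$ with $\|x\|'_{n,\alpha}:=\sup_{a\leq t_1<t_2\leq b}|x^{(n)}(t_2)-x^{(n)}(t_1)|/|t_2-t_1|^{\alpha}<\infty$, normed by $\|x\|_{n,\alpha}:=\sum_{j=0}^{n}\max_{[a,b]}|x^{(j)}|+\|x\|'_{n,\alpha}$. $(C^{n,\alpha})^{m}$ and $(C^{n,\alpha})^{m\times m}$ are the spaces of $m$-column vector-valued and $m\times m$ matrix-valued functions with entries in $C^{n,\alpha}$, normed by the sum of the entries' norms. *)

theory Defs
  imports "HOL-Analysis.Analysis"
begin

fun hder :: "real \<Rightarrow> real \<Rightarrow> nat \<Rightarrow> (real \<Rightarrow> complex) \<Rightarrow> real \<Rightarrow> complex" where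
  "hder a b 0 x = x"
| "hder a b (Suc j) x = (\<lambda>t. vector_derivative (hder a b j x) (at t within {a..b}))"

definition hoelder_semi :: "real \<Rightarrow> real \<Rightarrow> nat \<Rightarrow> real \<Rightarrow> (real \<Rightarrow> complex) \<Rightarrow> real" where
  "hoelder_semi a b n \<alpha> x = Sup ({0} \<union>
     {cmod (hder a b n x t2 - hder a b n x t1) / \<bar>t2 - t1\<bar> powr \<alpha> | t1 t2. a \<le> t1 \<and> t1 < t2 \<and> t2 \<le> b})"

definition Hoelder :: "real \<Rightarrow> real \<Rightarrow> nat \<Rightarrow> real \<Rightarrow> (real \<Rightarrow> complex) set" where
  "Hoelder a b n \<alpha> = {x.
     (\<forall>j\<le>n. continuous_on {a..b} (hder a b j x)) \<and>
     (\<forall>j<n. \<forall>t\<in>{a..b}. (hder a b j x has_vector_derivative hder a b (Suc j) x t) (at t within {a..b})) \<and>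
     bdd_above {cmod (hder a b n x t2 - hder a b n x t1) / \<bar>t2 - t1\<bar> powr \<alpha> | t1 t2. a \<le> t1 \<and> t1 < t2 \<and> t2 \<le> b}}"

definition hnorm :: "real \<Rightarrow> real \<Rightarrow> nat \<Rightarrow> real \<Rightarrow> (real \<Rightarrow> complex) \<Rightarrow> real" where
  "hnorm a b n \<alpha> x = (\<Sum>j\<le>n. Sup ((\<lambda>t. cmod (hder a b j x t)) ` {a..b})) + hoelder_semi a b n \<alpha> x"

definition vec_Hoelder :: "real \<Rightarrow> real \<Rightarrow> nat \<Rightarrow> real \<Rightarrow> ('m::finite \<Rightarrow> real \<Rightarrow> complex) set" where
  "vec_Hoelder a b n \<alpha> = {y. \<forall>i. y i \<in> Hoelder a b n \<alpha>}"

definition vec_hnorm :: "real \<Rightarrow> real \<Rightarrow> nat \<Rightarrow> real \<Rightarrow> ('m::finite \<Rightarrow> real \<Rightarrow> complex) \<Rightarrow> real" where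
  "vec_hnorm a b n \<alpha> y = (\<Sum>i\<in>UNIV. hnorm a b n \<alpha> (y i))"

definition mat_Hoelder :: "real \<Rightarrow> real \<Rightarrow> nat \<Rightarrow> real \<Rightarrow> ('m::finite \<Rightarrow> 'm \<Rightarrow> real \<Rightarrow> complex) set" where
  "mat_Hoelder a b n \<alpha> = {A. \<forall>i k. A i k \<in> Hoelder a b n \<alpha>}"

definition mat_hnorm :: "real \<Rightarrow> real \<Rightarrow> nat \<Rightarrow> real \<Rightarrow> ('m::finite \<Rightarrow> 'm \<Rightarrow> real \<Rightarrow> complex) \<Rightarrow> real" where
  "mat_hnorm a b n \<alpha> A = (\<Sum>i\<in>UNIV. \<Sum>k\<in>UNIV. hnorm a b n \<alpha> (A i k))"

definition diff_op :: "real \<Rightarrow> real \<Rightarrow> nat \<Rightarrow> (nat \<Rightarrow> 'm::finite \<Rightarrow> 'm \<Rightarrow> real \<Rightarrow> complex)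
    \<Rightarrow> ('m \<Rightarrow> real \<Rightarrow> complex) \<Rightarrow> ('m \<Rightarrow> real \<Rightarrow> complex)" where
  "diff_op a b r Ac y = (\<lambda>i t. hder a b r (y i) t +
      (\<Sum>j\<in>{1..r}. \<Sum>k\<in>UNIV. Ac (r - j) i k t * hder a b (r - j) (y k) t))"

definition op_norm :: "real \<Rightarrow> real \<Rightarrow> nat \<Rightarrow> nat \<Rightarrow> real
    \<Rightarrow> (('m::finite \<Rightarrow> real \<Rightarrow> complex) \<Rightarrow> ('m \<Rightarrow> real \<Rightarrow> complex)) \<Rightarrow> real" where
  "op_norm a b n r \<alpha> T = Sup ({0} \<union> {vec_hnorm a b n \<alpha> (T y) / vec_hnorm a b (n + r) \<alpha> y | y.
      y \<in> vec_Hoelder a b (n + r) \<alpha> \<and> vec_hnorm a b (n + r) \<alpha> y \<noteq> 0})"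

end

theory Submission
  imports Defs
begin


locale hctx =
  fixes a b \<alpha> :: real
  assumes ab: "a < b" and al0: "0 < \<alpha>" and al1: "\<alpha> \<le> 1"
begin

definition D :: "(real \<Rightarrow> complex) \<Rightarrow> real \<Rightarrow> complex" where
  "D h = (\<lambda>t. vector_derivative h (at t within {a..b}))"

definition Sf :: "(real \<Rightarrow> complex) \<Rightarrow> real" where
  "Sf h = Sup ((\<lambda>t. cmod (h t)) ` {a..b})"

definition Q :: "(real \<Rightarrow> complex) \<Rightarrow> real set" where
  "Q h = {cmod (h t2 - h t1) / \<bar>t2 - t1\<bar> powr \<alpha> | t1 t2. a \<le> t1 \<and> t1 < t2 \<and> t2 \<le> b}"

definition Sm :: "(real \<Rightarrow> complex) \<Rightarrow> real" where
  "Sm h = Sup ({0} \<union> Q h)"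

lemma hder_Suc_shift: "hder a b (Suc j) h = hder a b j (D h)"
  by (induction j) (simp_all add: D_def)

lemma hder_1: "hder a b 1 h = D h"
  by (simp add: D_def)

lemma all_le_Suc: "(\<forall>j\<le>Suc n. P j) = (P 0 \<and> (\<forall>j\<le>n. P (Suc j)))"
  by (metis Suc_le_mono le0 not0_implies_Suc)

lemma all_less_Suc: "(\<forall>j<Suc n. P j) = (P 0 \<and> (\<forall>j<n. P (Suc j)))"
  using less_Suc_eq_0_disj by auto

lemma Ho0: "h \<in> Hoelder a b 0 \<alpha> \<longleftrightarrow> continuous_on {a..b} h \<and> bdd_above (Q h)"
  by (simp add: Hoelder_def Q_def)

lemma HoS: "h \<in> Hoelder a b (Suc n) \<alpha> \<longleftrightarrow> continuous_on {a..b} h \<and>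
   (\<forall>t\<in>{a..b}. (h has_vector_derivative D h t) (at t within {a..b})) \<and> D h \<in> Hoelder a b n \<alpha>"
  unfolding Hoelder_def mem_Collect_eq all_le_Suc all_less_Suc hder_Suc_shift
  by (auto simp: D_def)

lemma hn0: "hnorm a b 0 \<alpha> h = Sf h + Sm h"
  by (simp add: hnorm_def Sf_def Sm_def hoelder_semi_def Q_def)

lemma hnS: "hnorm a b (Suc n) \<alpha> h = Sf h + hnorm a b n \<alpha> (D h)"
  unfolding hnorm_def hoelder_semi_def sum.atMost_Suc_shift hder_Suc_shift
  by (simp add: Sf_def)

lemma cont_bdd: assumes "continuous_on {a..b} h" shows "bdd_above ((\<lambda>t. cmod (h t)) ` {a..b})"
proof -
  have "compact ((\<lambda>t. cmod (h t)) ` {a..b})"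
    by (rule compact_continuous_image) (auto intro: continuous_intros assms)
  then show ?thesis by (auto intro: bounded_imp_bdd_above compact_imp_bounded)
qed

lemma Sf_ge: "continuous_on {a..b} h \<Longrightarrow> t \<in> {a..b} \<Longrightarrow> cmod (h t) \<le> Sf h"
  unfolding Sf_def by (rule cSup_upper) (auto intro: cont_bdd)

lemma Sf_nonneg: "continuous_on {a..b} h \<Longrightarrow> 0 \<le> Sf h"
proof -
  assume c: "continuous_on {a..b} h"
  have "cmod (h a) \<le> Sf h" using Sf_ge[OF c, of a] ab by simp
  then show ?thesis using norm_ge_zero order_trans by blast
qed

lemma Sf_le: "(\<And>t. t \<in> {a..b} \<Longrightarrow> cmod (h t) \<le> M) \<Longrightarrow> Sf h \<le> M"
  unfolding Sf_def using ab by (intro cSup_least) auto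

lemma Sf_cong: "(\<And>t. t \<in> {a..b} \<Longrightarrow> f t = g t) \<Longrightarrow> Sf f = Sf g"
  unfolding Sf_def by (metis image_cong)

lemma Sm_ge: "bdd_above (Q h) \<Longrightarrow> a \<le> t1 \<Longrightarrow> t1 < t2 \<Longrightarrow> t2 \<le> b \<Longrightarrow>
   cmod (h t2 - h t1) / \<bar>t2 - t1\<bar> powr \<alpha> \<le> Sm h"
  unfolding Sm_def by (rule cSup_upper) (auto simp: Q_def)

lemma Sm_nonneg: "bdd_above (Q h) \<Longrightarrow> 0 \<le> Sm h"
  unfolding Sm_def by (rule cSup_upper) auto

lemma Sm_le: "0 \<le> M \<Longrightarrow> (\<And>t1 t2. a \<le> t1 \<Longrightarrow> t1 < t2 \<Longrightarrow> t2 \<le> b \<Longrightarrow>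
   cmod (h t2 - h t1) / \<bar>t2 - t1\<bar> powr \<alpha> \<le> M) \<Longrightarrow> Sm h \<le> M"
  unfolding Sm_def Q_def by (intro cSup_least) auto

lemma Q_bdd: "(\<And>t1 t2. a \<le> t1 \<Longrightarrow> t1 < t2 \<Longrightarrow> t2 \<le> b \<Longrightarrow>
   cmod (h t2 - h t1) / \<bar>t2 - t1\<bar> powr \<alpha> \<le> M) \<Longrightarrow> bdd_above (Q h)"
  unfolding Q_def bdd_above_def by blast

lemma Q_cong: "(\<And>t. t \<in> {a..b} \<Longrightarrow> f t = g t) \<Longrightarrow> Q f = Q g"
proof -
  assume e: "\<And>t. t \<in> {a..b} \<Longrightarrow> f t = g t"
  show ?thesis unfolding Q_def
  proof (intro Collect_cong iffI; elim exE conjE)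
    fix x t1 t2 assume "x = cmod (f t2 - f t1) / \<bar>t2 - t1\<bar> powr \<alpha>" "a \<le> t1" "t1 < t2" "t2 \<le> b"
    then show "\<exists>t1 t2. x = cmod (g t2 - g t1) / \<bar>t2 - t1\<bar> powr \<alpha> \<and> a \<le> t1 \<and> t1 < t2 \<and> t2 \<le> b"
      using e[of t1] e[of t2] by (intro exI[of _ t1] exI[of _ t2]) auto
  next
    fix x t1 t2 assume "x = cmod (g t2 - g t1) / \<bar>t2 - t1\<bar> powr \<alpha>" "a \<le> t1" "t1 < t2" "t2 \<le> b"
    then show "\<exists>t1 t2. x = cmod (f t2 - f t1) / \<bar>t2 - t1\<bar> powr \<alpha> \<and> a \<le> t1 \<and> t1 < t2 \<and> t2 \<le> b"
      using e[of t1] e[of t2] by (intro exI[of _ t1] exI[of _ t2]) auto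
  qed
qed

lemma Sm_cong: "(\<And>t. t \<in> {a..b} \<Longrightarrow> f t = g t) \<Longrightarrow> Sm f = Sm g"
proof -
  assume e: "\<And>t. t \<in> {a..b} \<Longrightarrow> f t = g t"
  show ?thesis unfolding Sm_def using Q_cong[OF e] by simp
qed

lemma vd_unique: "t \<in> {a..b} \<Longrightarrow> (h has_vector_derivative v) (at t within {a..b}) \<Longrightarrow> D h t = v"
  unfolding D_def using vector_derivative_within_cbox[of a b t h v] ab by simp

lemma D_cong: assumes "\<And>t. t \<in> {a..b} \<Longrightarrow> f t = g t" "t \<in> {a..b}"
  shows "D f t = D g t"
proof -
  have "(f has_vector_derivative v) (at t within {a..b}) \<longleftrightarrow> (g has_vector_derivative v) (at t within {a..b})" for v
    using has_vector_derivative_transform[of t "{a..b}" f g v] has_vector_derivative_transform[of t "{a..b}" g f v]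
      assms by metis
  then show ?thesis unfolding D_def vector_derivative_def by simp
qed

lemma hder_cong: "(\<And>t. t \<in> {a..b} \<Longrightarrow> f t = g t) \<Longrightarrow> t \<in> {a..b} \<Longrightarrow> hder a b j f t = hder a b j g t"
proof (induction j arbitrary: t)
  case 0 then show ?case by simp
next
  case (Suc j)
  have "D (hder a b j f) t = D (hder a b j g) t"
    by (rule D_cong) (use Suc in auto)
  then show ?case by (simp add: D_def)
qed

lemma Ho_cong: "(\<And>t. t \<in> {a..b} \<Longrightarrow> f t = g t) \<Longrightarrow>
   (f \<in> Hoelder a b n \<alpha> \<longleftrightarrow> g \<in> Hoelder a b n \<alpha>) \<and> hnorm a b n \<alpha> f = hnorm a b n \<alpha> g"
proof (induction n arbitrary: f g)
  case 0
  have "Q f = Q g" "Sf f = Sf g" "Sm f = Sm g" using Q_cong[of f g] Sf_cong[of f g] Sm_cong[of f g] 0 by auto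
  moreover have "continuous_on {a..b} f \<longleftrightarrow> continuous_on {a..b} g"
    using 0 by (intro continuous_on_cong) auto
  ultimately show ?case unfolding Ho0 hn0 by simp
next
  case (Suc n)
  have DD: "\<And>t. t \<in> {a..b} \<Longrightarrow> D f t = D g t" by (rule D_cong) (use Suc in auto)
  have "(f has_vector_derivative D f t) (at t within {a..b}) \<longleftrightarrow> (g has_vector_derivative D g t) (at t within {a..b})"
    if "t \<in> {a..b}" for t
  proof
    assume "(f has_vector_derivative D f t) (at t within {a..b})"
    then show "(g has_vector_derivative D g t) (at t within {a..b})"
      using has_vector_derivative_transform[of t "{a..b}" g f "D f t"] Suc.prems DD[OF that] that by simp
  next
    assume "(g has_vector_derivative D g t) (at t within {a..b})"
    then show "(f has_vector_derivative D f t) (at t within {a..b})"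
      using has_vector_derivative_transform[of t "{a..b}" f g "D g t"] Suc.prems DD[OF that] that by simp
  qed
  moreover have "continuous_on {a..b} f \<longleftrightarrow> continuous_on {a..b} g"
    using Suc.prems by (intro continuous_on_cong) auto
  ultimately show ?case unfolding HoS hnS using Suc.IH[OF DD] Sf_cong[of f g] Suc.prems by auto
qed

lemma zero_Ho: "(\<lambda>t. 0) \<in> Hoelder a b n \<alpha> \<and> hnorm a b n \<alpha> (\<lambda>t. 0) = 0"
proof (induction n)
  case 0
  have "Sf (\<lambda>t. 0) = 0" using Sf_le[of "\<lambda>t. 0" 0] Sf_nonneg[of "\<lambda>t. 0"] by auto
  moreover have "Sm (\<lambda>t. 0) = 0" using Sm_le[of 0 "\<lambda>t. 0"] Sm_nonneg[of "\<lambda>t. 0"] Q_bdd[of "\<lambda>t. 0" 0] by auto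
  ultimately show ?case unfolding Ho0 hn0 using Q_bdd[of "\<lambda>t. 0" 0] by auto
next
  case (Suc n)
  have DD: "\<And>t. t \<in> {a..b} \<Longrightarrow> D (\<lambda>t. 0) t = 0" by (rule vd_unique) (auto intro: derivative_eq_intros)
  have "Sf (\<lambda>t. 0) = 0" using Sf_le[of "\<lambda>t. 0" 0] Sf_nonneg[of "\<lambda>t. 0"] by auto
  then show ?case unfolding HoS hnS using Ho_cong[of "D (\<lambda>t. 0)" "\<lambda>t. 0" n] DD Suc
    by (auto intro: derivative_eq_intros)
qed

lemma hnorm_nonneg: "h \<in> Hoelder a b n \<alpha> \<Longrightarrow> 0 \<le> hnorm a b n \<alpha> h"
proof (induction n arbitrary: h)
  case 0 then show ?case unfolding Ho0 hn0 using Sf_nonneg Sm_nonneg by (simp add: add_nonneg_nonneg)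
next
  case (Suc n) then show ?case unfolding HoS hnS using Sf_nonneg by (simp add: add_nonneg_nonneg)
qed

end



primrec Kp :: "real \<Rightarrow> nat \<Rightarrow> real" where
  "Kp c 0 = 1"
| "Kp c (Suc n) = 1 + 2 * c * Kp c n"

context hctx begin

definition c0 :: real where "c0 = (b - a) powr (1 - \<alpha>)"
definition CC :: real where "CC = 1 + c0"

lemma c0_nonneg: "0 \<le> c0" by (simp add: c0_def)
lemma CC_ge1: "1 \<le> CC" using c0_nonneg by (simp add: CC_def)

lemma dpos: "t1 < t2 \<Longrightarrow> 0 < \<bar>t2 - t1\<bar> powr \<alpha>" by simp

lemma lip:
  assumes der: "\<And>t. t \<in> {a..b} \<Longrightarrow> (h has_vector_derivative h' t) (at t within {a..b})"
    and bnd: "\<And>t. t \<in> {a..b} \<Longrightarrow> cmod (h' t) \<le> M"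
    and t: "a \<le> t1" "t1 < t2" "t2 \<le> b"
  shows "cmod (h t2 - h t1) / \<bar>t2 - t1\<bar> powr \<alpha> \<le> M * c0"
proof -
  have M0: "0 \<le> M" using bnd[of a] ab by (meson atLeastAtMost_iff less_eq_real_def norm_ge_zero order_trans)
  have "norm (h t2 - h t1) \<le> M * norm (t2 - t1)"
  proof (rule differentiable_bound[of "{a..b}" h "\<lambda>t x. x *\<^sub>R h' t" M])
    show "convex {a..b}" by simp
    show "(h has_derivative (\<lambda>x. x *\<^sub>R h' t)) (at t within {a..b})" if "t \<in> {a..b}" for t
      using der[OF that] by (simp add: has_vector_derivative_def)
    show "onorm (\<lambda>x. x *\<^sub>R h' t) \<le> M" if "t \<in> {a..b}" for t
    proof (rule onorm_bound[OF M0])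
      fix x :: real
      have "\<bar>x\<bar> * cmod (h' t) \<le> \<bar>x\<bar> * M" by (rule mult_left_mono) (use bnd[OF that] in auto)
      then show "norm (x *\<^sub>R h' t) \<le> M * norm x" by (simp add: mult.commute)
    qed
  qed (use t in auto)
  then have 1: "cmod (h t2 - h t1) \<le> M * (t2 - t1)" using t by simp
  define d where "d = t2 - t1"
  have d0: "0 < d" using t by (simp add: d_def)
  have "cmod (h t2 - h t1) / \<bar>t2 - t1\<bar> powr \<alpha> \<le> M * d / d powr \<alpha>"
    using 1 d0 by (simp add: d_def divide_right_mono)
  also have "\<dots> = M * d powr (1 - \<alpha>)" using d0 by (simp add: powr_diff)
  also have "\<dots> \<le> M * c0" unfolding c0_def
    using M0 d0 t al1 by (intro mult_left_mono powr_mono2) (auto simp: d_def)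
  finally show ?thesis .
qed

lemma add_Ho: "f \<in> Hoelder a b n \<alpha> \<Longrightarrow> g \<in> Hoelder a b n \<alpha> \<Longrightarrow>
   (\<lambda>t. f t + g t) \<in> Hoelder a b n \<alpha> \<and> hnorm a b n \<alpha> (\<lambda>t. f t + g t) \<le> hnorm a b n \<alpha> f + hnorm a b n \<alpha> g"
proof (induction n arbitrary: f g)
  case 0
  then have cf: "continuous_on {a..b} f" "bdd_above (Q f)" and cg: "continuous_on {a..b} g" "bdd_above (Q g)"
    by (auto simp: Ho0)
  have q: "cmod ((f t2 + g t2) - (f t1 + g t1)) / \<bar>t2 - t1\<bar> powr \<alpha> \<le> Sm f + Sm g"
    if "a \<le> t1" "t1 < t2" "t2 \<le> b" for t1 t2
  proof -
    have "cmod ((f t2 + g t2) - (f t1 + g t1)) \<le> cmod (f t2 - f t1) + cmod (g t2 - g t1)"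
      by (metis add_diff_add norm_triangle_ineq)
    then have "cmod ((f t2 + g t2) - (f t1 + g t1)) / \<bar>t2 - t1\<bar> powr \<alpha> \<le>
        cmod (f t2 - f t1) / \<bar>t2 - t1\<bar> powr \<alpha> + cmod (g t2 - g t1) / \<bar>t2 - t1\<bar> powr \<alpha>"
      by (simp add: add_divide_distrib[symmetric] divide_right_mono)
    also have "\<dots> \<le> Sm f + Sm g" using Sm_ge[OF cf(2) that] Sm_ge[OF cg(2) that] by simp
    finally show ?thesis .
  qed
  have "Sm (\<lambda>t. f t + g t) \<le> Sm f + Sm g"
    by (rule Sm_le) (use q Sm_nonneg cf cg in auto)
  moreover have "Sf (\<lambda>t. f t + g t) \<le> Sf f + Sf g"
    by (rule Sf_le) (use Sf_ge cf cg in \<open>smt (verit) norm_triangle_ineq\<close>)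
  moreover have "bdd_above (Q (\<lambda>t. f t + g t))" by (rule Q_bdd) (rule q)
  ultimately show ?case unfolding Ho0 hn0 using cf cg by (auto intro: continuous_intros)
next
  case (Suc n)
  then have f: "continuous_on {a..b} f" "\<And>t. t\<in>{a..b} \<Longrightarrow> (f has_vector_derivative D f t) (at t within {a..b})" "D f \<in> Hoelder a b n \<alpha>"
    and g: "continuous_on {a..b} g" "\<And>t. t\<in>{a..b} \<Longrightarrow> (g has_vector_derivative D g t) (at t within {a..b})" "D g \<in> Hoelder a b n \<alpha>"
    by (auto simp: HoS)
  have dv: "((\<lambda>t. f t + g t) has_vector_derivative D f t + D g t) (at t within {a..b})" if "t \<in> {a..b}" for t
    using f(2)[OF that] g(2)[OF that] by (rule has_vector_derivative_add)
  have DD: "D (\<lambda>t. f t + g t) t = D f t + D g t" if "t \<in> {a..b}" for t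
    using vd_unique[OF that dv[OF that]] .
  have IH: "(\<lambda>t. D f t + D g t) \<in> Hoelder a b n \<alpha> \<and> hnorm a b n \<alpha> (\<lambda>t. D f t + D g t) \<le> hnorm a b n \<alpha> (D f) + hnorm a b n \<alpha> (D g)"
    using Suc.IH[OF f(3) g(3)] .
  have cg2: "(D (\<lambda>t. f t + g t) \<in> Hoelder a b n \<alpha> \<longleftrightarrow> (\<lambda>t. D f t + D g t) \<in> Hoelder a b n \<alpha>) \<and>
     hnorm a b n \<alpha> (D (\<lambda>t. f t + g t)) = hnorm a b n \<alpha> (\<lambda>t. D f t + D g t)"
    by (rule Ho_cong) (rule DD)
  have "Sf (\<lambda>t. f t + g t) \<le> Sf f + Sf g"
    by (rule Sf_le) (use Sf_ge f g in \<open>smt (verit) norm_triangle_ineq\<close>)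
  then show ?case unfolding HoS hnS using IH cg2 f g dv DD
    by (auto intro: continuous_intros)
qed

lemma diff_Ho: "f \<in> Hoelder a b n \<alpha> \<Longrightarrow> g \<in> Hoelder a b n \<alpha> \<Longrightarrow>
   (\<lambda>t. f t - g t) \<in> Hoelder a b n \<alpha> \<and> hnorm a b n \<alpha> (\<lambda>t. f t - g t) \<le> hnorm a b n \<alpha> f + hnorm a b n \<alpha> g"
proof (induction n arbitrary: f g)
  case 0
  then have cf: "continuous_on {a..b} f" "bdd_above (Q f)" and cg: "continuous_on {a..b} g" "bdd_above (Q g)"
    by (auto simp: Ho0)
  have q: "cmod ((f t2 - g t2) - (f t1 - g t1)) / \<bar>t2 - t1\<bar> powr \<alpha> \<le> Sm f + Sm g"
    if "a \<le> t1" "t1 < t2" "t2 \<le> b" for t1 t2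
  proof -
    have "cmod ((f t2 - g t2) - (f t1 - g t1)) \<le> cmod (f t2 - f t1) + cmod (g t2 - g t1)"
      by (metis diff_diff_eq2 diff_diff_add add_diff_eq diff_add_eq norm_triangle_ineq4 diff_add_eq_diff_diff_swap)
    then have "cmod ((f t2 - g t2) - (f t1 - g t1)) / \<bar>t2 - t1\<bar> powr \<alpha> \<le>
        cmod (f t2 - f t1) / \<bar>t2 - t1\<bar> powr \<alpha> + cmod (g t2 - g t1) / \<bar>t2 - t1\<bar> powr \<alpha>"
      by (simp add: add_divide_distrib[symmetric] divide_right_mono)
    also have "\<dots> \<le> Sm f + Sm g" using Sm_ge[OF cf(2) that] Sm_ge[OF cg(2) that] by simp
    finally show ?thesis .
  qed
  have "Sm (\<lambda>t. f t - g t) \<le> Sm f + Sm g"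
    by (rule Sm_le) (use q Sm_nonneg cf cg in auto)
  moreover have "Sf (\<lambda>t. f t - g t) \<le> Sf f + Sf g"
    by (rule Sf_le) (use Sf_ge cf cg in \<open>smt (verit) norm_triangle_ineq4\<close>)
  moreover have "bdd_above (Q (\<lambda>t. f t - g t))" by (rule Q_bdd) (rule q)
  ultimately show ?case unfolding Ho0 hn0 using cf cg by (auto intro: continuous_intros)
next
  case (Suc n)
  then have f: "continuous_on {a..b} f" "\<And>t. t\<in>{a..b} \<Longrightarrow> (f has_vector_derivative D f t) (at t within {a..b})" "D f \<in> Hoelder a b n \<alpha>"
    and g: "continuous_on {a..b} g" "\<And>t. t\<in>{a..b} \<Longrightarrow> (g has_vector_derivative D g t) (at t within {a..b})" "D g \<in> Hoelder a b n \<alpha>"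
    by (auto simp: HoS)
  have dv: "((\<lambda>t. f t - g t) has_vector_derivative D f t - D g t) (at t within {a..b})" if "t \<in> {a..b}" for t
    using f(2)[OF that] g(2)[OF that] by (rule has_vector_derivative_diff)
  have DD: "D (\<lambda>t. f t - g t) t = D f t - D g t" if "t \<in> {a..b}" for t
    using vd_unique[OF that dv[OF that]] .
  have IH: "(\<lambda>t. D f t - D g t) \<in> Hoelder a b n \<alpha> \<and> hnorm a b n \<alpha> (\<lambda>t. D f t - D g t) \<le> hnorm a b n \<alpha> (D f) + hnorm a b n \<alpha> (D g)"
    using Suc.IH[OF f(3) g(3)] .
  have cg2: "(D (\<lambda>t. f t - g t) \<in> Hoelder a b n \<alpha> \<longleftrightarrow> (\<lambda>t. D f t - D g t) \<in> Hoelder a b n \<alpha>) \<and>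
     hnorm a b n \<alpha> (D (\<lambda>t. f t - g t)) = hnorm a b n \<alpha> (\<lambda>t. D f t - D g t)"
    by (rule Ho_cong) (rule DD)
  have "Sf (\<lambda>t. f t - g t) \<le> Sf f + Sf g"
    by (rule Sf_le) (use Sf_ge f g in \<open>smt (verit) norm_triangle_ineq4\<close>)
  then show ?case unfolding HoS hnS using IH cg2 f g dv DD
    by (auto intro: continuous_intros)
qed

lemma embed1: "h \<in> Hoelder a b (Suc n) \<alpha> \<Longrightarrow> h \<in> Hoelder a b n \<alpha> \<and> hnorm a b n \<alpha> h \<le> CC * hnorm a b (Suc n) \<alpha> h"
proof (induction n arbitrary: h)
  case 0
  then have h: "continuous_on {a..b} h" "\<And>t. t\<in>{a..b} \<Longrightarrow> (h has_vector_derivative D h t) (at t within {a..b})"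
    "continuous_on {a..b} (D h)" "bdd_above (Q (D h))"
    by (auto simp: HoS Ho0)
  have q: "cmod (h t2 - h t1) / \<bar>t2 - t1\<bar> powr \<alpha> \<le> Sf (D h) * c0" if "a \<le> t1" "t1 < t2" "t2 \<le> b" for t1 t2
    by (rule lip[OF h(2)]) (use Sf_ge[OF h(3)] that in auto)
  have bq: "bdd_above (Q h)" by (rule Q_bdd) (rule q)
  have sm: "Sm h \<le> Sf (D h) * c0" by (rule Sm_le) (use q Sf_nonneg[OF h(3)] c0_nonneg in auto)
  have X: "0 \<le> Sf h" "0 \<le> Sf (D h)" "0 \<le> Sm (D h)" using Sf_nonneg h Sm_nonneg by auto
  have "Sf h + Sm h \<le> CC * (Sf h + (Sf (D h) + Sm (D h)))"
  proof -
    have "0 \<le> c0 * Sf h" "0 \<le> c0 * Sm (D h)" using X c0_nonneg by auto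
    then show ?thesis using sm X unfolding CC_def by (simp add: algebra_simps)
  qed
  then show ?case unfolding Ho0 hn0 hnS using h bq by simp
next
  case (Suc n)
  then have h: "continuous_on {a..b} h" "\<And>t. t\<in>{a..b} \<Longrightarrow> (h has_vector_derivative D h t) (at t within {a..b})"
    "D h \<in> Hoelder a b (Suc n) \<alpha>"
    by (auto simp: HoS)
  note IH = Suc.IH[OF h(3)]
  have "Sf h + hnorm a b n \<alpha> (D h) \<le> CC * (Sf h + hnorm a b (Suc n) \<alpha> (D h))"
  proof -
    have "0 \<le> Sf h" using Sf_nonneg h by auto
    then have "Sf h \<le> CC * Sf h" using CC_ge1 by (simp add: mult_le_cancel_right1)
    then show ?thesis using IH by (simp add: algebra_simps)
  qed
  moreover have "hnorm a b (Suc n) \<alpha> h = Sf h + hnorm a b n \<alpha> (D h)" by (rule hnS)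
  moreover have "hnorm a b (Suc (Suc n)) \<alpha> h = Sf h + hnorm a b (Suc n) \<alpha> (D h)" by (rule hnS)
  moreover have "h \<in> Hoelder a b (Suc n) \<alpha>" using IH h by (subst HoS) auto
  ultimately show ?case by simp
qed

lemma embedk: "h \<in> Hoelder a b (n + k) \<alpha> \<Longrightarrow> h \<in> Hoelder a b n \<alpha> \<and> hnorm a b n \<alpha> h \<le> CC ^ k * hnorm a b (n + k) \<alpha> h"
proof (induction k)
  case 0 then show ?case by simp
next
  case (Suc k)
  have e: "h \<in> Hoelder a b (n + k) \<alpha>" "hnorm a b (n + k) \<alpha> h \<le> CC * hnorm a b (n + Suc k) \<alpha> h"
    using embed1[of h "n + k"] Suc.prems by auto
  with Suc.IH have "h \<in> Hoelder a b n \<alpha>" "hnorm a b n \<alpha> h \<le> CC ^ k * hnorm a b (n + k) \<alpha> h" by auto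
  moreover have "CC ^ k * hnorm a b (n + k) \<alpha> h \<le> CC ^ k * (CC * hnorm a b (n + Suc k) \<alpha> h)"
    using e CC_ge1 by (intro mult_left_mono) auto
  ultimately show ?case by (simp add: mult.assoc mult.left_commute)
qed

lemma hder_Ho: "y \<in> Hoelder a b (n + i) \<alpha> \<Longrightarrow> hder a b i y \<in> Hoelder a b n \<alpha> \<and> hnorm a b n \<alpha> (hder a b i y) \<le> hnorm a b (n + i) \<alpha> y"
proof (induction i arbitrary: y)
  case 0 then show ?case by simp
next
  case (Suc i)
  then have y: "continuous_on {a..b} y" "D y \<in> Hoelder a b (n + i) \<alpha>" by (auto simp: HoS)
  have "0 \<le> Sf y" using Sf_nonneg y by auto
  then show ?case using Suc.IH[OF y(2)] unfolding hder_Suc_shift by (simp add: hnS)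
qed

lemma Kp_ge1: "0 \<le> c \<Longrightarrow> 1 \<le> Kp c n"
  by (induction n) auto

end



context hctx begin

lemma mult_Ho: "f \<in> Hoelder a b n \<alpha> \<Longrightarrow> g \<in> Hoelder a b n \<alpha> \<Longrightarrow>
   (\<lambda>t. f t * g t) \<in> Hoelder a b n \<alpha> \<and> hnorm a b n \<alpha> (\<lambda>t. f t * g t) \<le> Kp CC n * hnorm a b n \<alpha> f * hnorm a b n \<alpha> g"
proof (induction n arbitrary: f g)
  case 0
  then have cf: "continuous_on {a..b} f" "bdd_above (Q f)" and cg: "continuous_on {a..b} g" "bdd_above (Q g)"
    by (auto simp: Ho0)
  have X: "0 \<le> Sf f" "0 \<le> Sf g" "0 \<le> Sm f" "0 \<le> Sm g" using Sf_nonneg Sm_nonneg cf cg by auto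
  have q: "cmod (f t2 * g t2 - f t1 * g t1) / \<bar>t2 - t1\<bar> powr \<alpha> \<le> Sf f * Sm g + Sm f * Sf g"
    if "a \<le> t1" "t1 < t2" "t2 \<le> b" for t1 t2
  proof -
    define d where "d = \<bar>t2 - t1\<bar> powr \<alpha>"
    have d0: "0 < d" using that by (simp add: d_def)
    have "f t2 * g t2 - f t1 * g t1 = f t2 * (g t2 - g t1) + (f t2 - f t1) * g t1"
      by (simp add: algebra_simps)
    then have "cmod (f t2 * g t2 - f t1 * g t1) \<le> cmod (f t2) * cmod (g t2 - g t1) + cmod (f t2 - f t1) * cmod (g t1)"
      by (metis norm_mult norm_triangle_ineq)
    also have "\<dots> \<le> Sf f * cmod (g t2 - g t1) + cmod (f t2 - f t1) * Sf g"
      using Sf_ge[OF cf(1), of t2] Sf_ge[OF cg(1), of t1] that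
      by (intro add_mono mult_right_mono mult_left_mono) auto
    finally have "cmod (f t2 * g t2 - f t1 * g t1) / d \<le> (Sf f * cmod (g t2 - g t1) + cmod (f t2 - f t1) * Sf g) / d"
      using d0 by (simp add: divide_right_mono)
    also have "\<dots> = Sf f * (cmod (g t2 - g t1) / d) + (cmod (f t2 - f t1) / d) * Sf g"
      by (simp add: add_divide_distrib)
    also have "\<dots> \<le> Sf f * Sm g + Sm f * Sf g"
      using Sm_ge[OF cf(2) that] Sm_ge[OF cg(2) that] X unfolding d_def
      by (intro add_mono mult_right_mono mult_left_mono) auto
    finally show ?thesis unfolding d_def .
  qed
  have sm: "Sm (\<lambda>t. f t * g t) \<le> Sf f * Sm g + Sm f * Sf g"
    by (rule Sm_le) (use q X in auto)
  have sf: "Sf (\<lambda>t. f t * g t) \<le> Sf f * Sf g"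
    by (rule Sf_le) (use Sf_ge cf cg X in \<open>auto simp: norm_mult intro!: mult_mono\<close>)
  have bq: "bdd_above (Q (\<lambda>t. f t * g t))" by (rule Q_bdd) (rule q)
  have "Sf f * Sf g + (Sf f * Sm g + Sm f * Sf g) \<le> (Sf f + Sm f) * (Sf g + Sm g)"
    using X by (simp add: algebra_simps)
  then show ?case unfolding Ho0 hn0 using cf cg bq sm sf by (auto intro: continuous_intros)
next
  case (Suc n)
  then have f: "continuous_on {a..b} f" "\<And>t. t\<in>{a..b} \<Longrightarrow> (f has_vector_derivative D f t) (at t within {a..b})" "D f \<in> Hoelder a b n \<alpha>"
    and g: "continuous_on {a..b} g" "\<And>t. t\<in>{a..b} \<Longrightarrow> (g has_vector_derivative D g t) (at t within {a..b})" "D g \<in> Hoelder a b n \<alpha>"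
    by (auto simp: HoS)
  have ef: "f \<in> Hoelder a b n \<alpha>" "hnorm a b n \<alpha> f \<le> CC * hnorm a b (Suc n) \<alpha> f" using embed1 Suc.prems by auto
  have eg: "g \<in> Hoelder a b n \<alpha>" "hnorm a b n \<alpha> g \<le> CC * hnorm a b (Suc n) \<alpha> g" using embed1 Suc.prems by auto
  have dv: "((\<lambda>t. f t * g t) has_vector_derivative f t * D g t + D f t * g t) (at t within {a..b})" if "t \<in> {a..b}" for t
    using f(2)[OF that] g(2)[OF that] by (rule has_vector_derivative_mult)
  have DD: "D (\<lambda>t. f t * g t) t = f t * D g t + D f t * g t" if "t \<in> {a..b}" for t
    using vd_unique[OF that dv[OF that]] .
  have I1: "(\<lambda>t. f t * D g t) \<in> Hoelder a b n \<alpha>" "hnorm a b n \<alpha> (\<lambda>t. f t * D g t) \<le> Kp CC n * hnorm a b n \<alpha> f * hnorm a b n \<alpha> (D g)"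
    using Suc.IH[OF ef(1) g(3)] by auto
  have I2: "(\<lambda>t. D f t * g t) \<in> Hoelder a b n \<alpha>" "hnorm a b n \<alpha> (\<lambda>t. D f t * g t) \<le> Kp CC n * hnorm a b n \<alpha> (D f) * hnorm a b n \<alpha> g"
    using Suc.IH[OF f(3) eg(1)] by auto
  have S: "(\<lambda>t. f t * D g t + D f t * g t) \<in> Hoelder a b n \<alpha>"
     "hnorm a b n \<alpha> (\<lambda>t. f t * D g t + D f t * g t) \<le> hnorm a b n \<alpha> (\<lambda>t. f t * D g t) + hnorm a b n \<alpha> (\<lambda>t. D f t * g t)"
    using add_Ho[OF I1(1) I2(1)] by auto
  have cg2: "(D (\<lambda>t. f t * g t) \<in> Hoelder a b n \<alpha> \<longleftrightarrow> (\<lambda>t. f t * D g t + D f t * g t) \<in> Hoelder a b n \<alpha>) \<and>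
     hnorm a b n \<alpha> (D (\<lambda>t. f t * g t)) = hnorm a b n \<alpha> (\<lambda>t. f t * D g t + D f t * g t)"
    by (rule Ho_cong) (rule DD)
  have X: "0 \<le> Sf f" "0 \<le> Sf g" "0 \<le> hnorm a b n \<alpha> (D f)" "0 \<le> hnorm a b n \<alpha> (D g)"
    "0 \<le> hnorm a b n \<alpha> f" "0 \<le> hnorm a b n \<alpha> g"
    using Sf_nonneg hnorm_nonneg f g ef eg by auto
  define Hf where "Hf = hnorm a b (Suc n) \<alpha> f"
  define Hg where "Hg = hnorm a b (Suc n) \<alpha> g"
  have Hf: "Hf = Sf f + hnorm a b n \<alpha> (D f)" and Hg: "Hg = Sf g + hnorm a b n \<alpha> (D g)"
    unfolding Hf_def Hg_def by (rule hnS)+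
  have sf: "Sf (\<lambda>t. f t * g t) \<le> Sf f * Sf g"
    by (rule Sf_le) (use Sf_ge f g X in \<open>auto simp: norm_mult intro!: mult_mono\<close>)
  have K0: "0 \<le> Kp CC n" using Kp_ge1[of CC n] CC_ge1 by simp
  have C0: "0 \<le> CC" using CC_ge1 by simp
  have m1: "hnorm a b n \<alpha> f * hnorm a b n \<alpha> (D g) \<le> (CC * Hf) * Hg"
    using ef(2) X Hg unfolding Hf_def by (intro mult_mono) auto
  have m2: "hnorm a b n \<alpha> (D f) * hnorm a b n \<alpha> g \<le> Hf * (CC * Hg)"
    using eg(2) X Hf unfolding Hg_def by (intro mult_mono) (auto simp: Hf_def)
  have m3: "Sf f * Sf g \<le> Hf * Hg" using X Hf Hg by (intro mult_mono) auto
  have "hnorm a b n \<alpha> (D (\<lambda>t. f t * g t)) \<le> Kp CC n * (hnorm a b n \<alpha> f * hnorm a b n \<alpha> (D g)) + Kp CC n * (hnorm a b n \<alpha> (D f) * hnorm a b n \<alpha> g)"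
    using cg2 S I1 I2 by (simp add: mult.assoc)
  also have "\<dots> \<le> Kp CC n * ((CC * Hf) * Hg) + Kp CC n * (Hf * (CC * Hg))"
    using m1 m2 K0 by (intro add_mono mult_left_mono) auto
  finally have "hnorm a b (Suc n) \<alpha> (\<lambda>t. f t * g t) \<le> Hf * Hg + (Kp CC n * ((CC * Hf) * Hg) + Kp CC n * (Hf * (CC * Hg)))"
    using sf m3 hnS[of n "\<lambda>t. f t * g t"] by simp
  also have "\<dots> = Kp CC (Suc n) * Hf * Hg" by (simp add: algebra_simps)
  finally have nb: "hnorm a b (Suc n) \<alpha> (\<lambda>t. f t * g t) \<le> Kp CC (Suc n) * Hf * Hg" .
  have "(\<lambda>t. f t * g t) \<in> Hoelder a b (Suc n) \<alpha>"
    using f g dv DD cg2 S by (subst HoS) (auto intro: continuous_intros)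
  then show ?case using nb unfolding Hf_def Hg_def by simp
qed

lemma sum_Ho: "finite S \<Longrightarrow> (\<And>j. j \<in> S \<Longrightarrow> f j \<in> Hoelder a b n \<alpha>) \<Longrightarrow>
   (\<lambda>t. \<Sum>j\<in>S. f j t) \<in> Hoelder a b n \<alpha> \<and> hnorm a b n \<alpha> (\<lambda>t. \<Sum>j\<in>S. f j t) \<le> (\<Sum>j\<in>S. hnorm a b n \<alpha> (f j))"
proof (induction S rule: finite_induct)
  case empty then show ?case using zero_Ho by simp
next
  case (insert x F)
  have "(\<lambda>t. f x t + (\<Sum>j\<in>F. f j t)) \<in> Hoelder a b n \<alpha> \<and>
    hnorm a b n \<alpha> (\<lambda>t. f x t + (\<Sum>j\<in>F. f j t)) \<le> hnorm a b n \<alpha> (f x) + hnorm a b n \<alpha> (\<lambda>t. \<Sum>j\<in>F. f j t)"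
    using add_Ho[of "f x" n "\<lambda>t. \<Sum>j\<in>F. f j t"] insert by auto
  then show ?case using insert by simp
qed

definition P :: "complex \<Rightarrow> nat \<Rightarrow> real \<Rightarrow> complex" where
  "P c p t = c * complex_of_real ((t - a) ^ p)"

lemma P_der: "(P c p has_vector_derivative P (c * of_nat p) (p - 1) t) (at t within S)"
proof -
  have "((\<lambda>t. (t - a) ^ p) has_real_derivative real p * (t - a) ^ (p - 1)) (at t within S)"
    by (auto intro!: derivative_eq_intros)
  then have "((\<lambda>t. complex_of_real ((t - a) ^ p)) has_vector_derivative complex_of_real (real p * (t - a) ^ (p - 1))) (at t within S)"
    by (rule has_vector_derivative_of_real)
  then have "((\<lambda>t. c * complex_of_real ((t - a) ^ p)) has_vector_derivative c * complex_of_real (real p * (t - a) ^ (p - 1))) (at t within S)"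
    by (rule has_vector_derivative_mult_right)
  then show ?thesis unfolding P_def[abs_def] by (simp add: mult.assoc)
qed

lemma D_P: "t \<in> {a..b} \<Longrightarrow> D (P c p) t = P (c * of_nat p) (p - 1) t"
  by (erule vd_unique[OF _ P_der])

lemma P_cont: "continuous_on {a..b} (P c p)"
  unfolding P_def[abs_def] by (auto intro!: continuous_intros)

lemma P_Ho: "P c p \<in> Hoelder a b N \<alpha>"
proof (induction N arbitrary: c p)
  case 0
  have q: "cmod (P c p t2 - P c p t1) / \<bar>t2 - t1\<bar> powr \<alpha> \<le> (cmod c * real p * (b - a) ^ (p - 1)) * c0"
    if "a \<le> t1" "t1 < t2" "t2 \<le> b" for t1 t2
  proof (rule lip[OF _ _ that])
    show "(P c p has_vector_derivative P (c * of_nat p) (p - 1) t) (at t within {a..b})" for t by (rule P_der)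
    show "cmod (P (c * of_nat p) (p - 1) t) \<le> cmod c * real p * (b - a) ^ (p - 1)" if "t \<in> {a..b}" for t
    proof -
      have "\<bar>t - a\<bar> ^ (p - 1) \<le> (b - a) ^ (p - 1)" using that by (intro power_mono) auto
      moreover have "cmod (P (c * of_nat p) (p - 1) t) = cmod c * real p * \<bar>t - a\<bar> ^ (p - 1)"
        unfolding P_def by (simp add: norm_mult norm_power del: of_real_diff)
      ultimately show ?thesis by (simp add: mult_left_mono)
    qed
  qed
  show ?case unfolding Ho0 using P_cont Q_bdd[OF q] by auto
next
  case (Suc N)
  have "(D (P c p) \<in> Hoelder a b N \<alpha> \<longleftrightarrow> P (c * of_nat p) (p - 1) \<in> Hoelder a b N \<alpha>) \<and> True"
    using Ho_cong[of "D (P c p)" "P (c * of_nat p) (p - 1)" N] D_P by auto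
  then show ?case using Suc.IH P_cont D_P P_der by (subst HoS) auto
qed

lemma hder_P: "t \<in> {a..b} \<Longrightarrow> hder a b q (P c p) t = P (c * of_nat (\<Prod>i<q. p - i)) (p - q) t"
proof (induction q arbitrary: c p t)
  case 0 then show ?case by simp
next
  case (Suc q)
  have "hder a b (Suc q) (P c p) t = hder a b q (D (P c p)) t" by (simp only: hder_Suc_shift)
  also have "\<dots> = hder a b q (P (c * of_nat p) (p - 1)) t"
    by (rule hder_cong) (use D_P Suc.prems in auto)
  also have "\<dots> = P (c * of_nat p * of_nat (\<Prod>i<q. p - 1 - i)) (p - 1 - q) t"
    using Suc.IH[OF Suc.prems] by simp
  also have "\<dots> = P (c * of_nat (\<Prod>i<Suc q. p - i)) (p - Suc q) t"
  proof -
    have "(\<Prod>i<Suc q. p - i) = p * (\<Prod>i<q. p - 1 - i)" unfolding prod.lessThan_Suc_shift by simp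
    moreover have "p - 1 - q = p - Suc q" by simp
    ultimately show ?thesis by (simp add: mult.assoc)
  qed
  finally show ?case .
qed

end



lemma delta: "diff_op a b r (\<lambda>p. A p e) y i t - diff_op a b r (\<lambda>p. A p 0) y i t =
  (\<Sum>j\<in>{1..r}. \<Sum>k\<in>UNIV. (A (r - j) e i k t - A (r - j) 0 i k t) * hder a b (r - j) (y k) t)"
  unfolding diff_op_def by (simp add: sum_subtractf[symmetric] left_diff_distrib)

context hctx begin

lemma vec_nonneg: "y \<in> vec_Hoelder a b N \<alpha> \<Longrightarrow> 0 \<le> vec_hnorm a b N \<alpha> y"
  unfolding vec_Hoelder_def vec_hnorm_def by (auto intro!: sum_nonneg hnorm_nonneg)

lemma vec_comp_le: "y \<in> vec_Hoelder a b N \<alpha> \<Longrightarrow> hnorm a b N \<alpha> (y k) \<le> vec_hnorm a b N \<alpha> y"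
  unfolding vec_Hoelder_def vec_hnorm_def
  by (rule member_le_sum) (auto intro!: hnorm_nonneg)

lemma bound:
  fixes A :: "nat \<Rightarrow> real \<Rightarrow> 'm::finite \<Rightarrow> 'm \<Rightarrow> real \<Rightarrow> complex"
  assumes hA: "\<And>j. j \<in> {1..r} \<Longrightarrow> A (r - j) e \<in> mat_Hoelder a b n \<alpha>" "\<And>j. j \<in> {1..r} \<Longrightarrow> A (r - j) 0 \<in> mat_Hoelder a b n \<alpha>"
    and y: "y \<in> vec_Hoelder a b (n + r) \<alpha>"
  shows "(\<forall>i. (\<lambda>t. diff_op a b r (\<lambda>p. A p e) y i t - diff_op a b r (\<lambda>p. A p 0) y i t) \<in> Hoelder a b n \<alpha>) \<and>
    vec_hnorm a b n \<alpha> (\<lambda>i t. diff_op a b r (\<lambda>p. A p e) y i t - diff_op a b r (\<lambda>p. A p 0) y i t)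
      \<le> Kp CC n * CC ^ r * (\<Sum>j\<in>{1..r}. mat_hnorm a b n \<alpha> (\<lambda>i k t. A (r - j) e i k t - A (r - j) 0 i k t)) * vec_hnorm a b (n + r) \<alpha> y"
proof -
  define dA where "dA j i k = (\<lambda>t. A (r - j) e i k t - A (r - j) 0 i k t)" for j i k
  define z where "z j k = hder a b (r - j) (y k)" for j k
  define V where "V = vec_hnorm a b (n + r) \<alpha> y"
  define K where "K = Kp CC n"
  have K0: "0 \<le> K" using Kp_ge1[of CC n] CC_ge1 by (simp add: K_def)
  have V0: "0 \<le> V" using vec_nonneg[OF y] by (simp add: V_def)
  have dAH: "dA j i k \<in> Hoelder a b n \<alpha>" if "j \<in> {1..r}" for j i k
    using diff_Ho[of "A (r - j) e i k" n "A (r - j) 0 i k"] hA[OF that] unfolding mat_Hoelder_def dA_def by auto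
  have zH: "z j k \<in> Hoelder a b n \<alpha> \<and> hnorm a b n \<alpha> (z j k) \<le> CC ^ r * V" if j: "j \<in> {1..r}" for j k
  proof -
    have yk: "y k \<in> Hoelder a b ((n + j) + (r - j)) \<alpha>" using y j unfolding vec_Hoelder_def by auto
    have h1: "z j k \<in> Hoelder a b (n + j) \<alpha>" "hnorm a b (n + j) \<alpha> (z j k) \<le> hnorm a b (n + r) \<alpha> (y k)"
      using hder_Ho[OF yk] j unfolding z_def by auto
    have h2: "z j k \<in> Hoelder a b n \<alpha>" "hnorm a b n \<alpha> (z j k) \<le> CC ^ j * hnorm a b (n + j) \<alpha> (z j k)"
      using embedk[OF h1(1)] by auto
    have "CC ^ j \<le> CC ^ r" using j CC_ge1 by (intro power_increasing) auto
    have "hnorm a b n \<alpha> (z j k) \<le> CC ^ j * hnorm a b (n + r) \<alpha> (y k)"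
      using h2(2) h1(2) CC_ge1 by (meson dual_order.trans mult_left_mono zero_le_one zero_le_power)
    also have "\<dots> \<le> CC ^ r * V"
      using \<open>CC ^ j \<le> CC ^ r\<close> vec_comp_le[OF y, of k] hnorm_nonneg[of "y k" "n + r"] y CC_ge1
      unfolding V_def vec_Hoelder_def by (intro mult_mono) auto
    finally show ?thesis using h2 by auto
  qed
  have tH: "(\<lambda>t. dA j i k t * z j k t) \<in> Hoelder a b n \<alpha> \<and>
      hnorm a b n \<alpha> (\<lambda>t. dA j i k t * z j k t) \<le> K * hnorm a b n \<alpha> (dA j i k) * (CC ^ r * V)" if j: "j \<in> {1..r}" for j i k
  proof -
    have m: "(\<lambda>t. dA j i k t * z j k t) \<in> Hoelder a b n \<alpha>"
       "hnorm a b n \<alpha> (\<lambda>t. dA j i k t * z j k t) \<le> K * hnorm a b n \<alpha> (dA j i k) * hnorm a b n \<alpha> (z j k)"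
      using mult_Ho[OF dAH[OF j] conjunct1[OF zH[OF j]]] unfolding K_def by auto
    have "K * hnorm a b n \<alpha> (dA j i k) * hnorm a b n \<alpha> (z j k) \<le> K * hnorm a b n \<alpha> (dA j i k) * (CC ^ r * V)"
      using zH[OF j] K0 hnorm_nonneg[OF dAH[OF j]] by (intro mult_left_mono) auto
    then show ?thesis using m by auto
  qed
  have eq: "(\<lambda>t. diff_op a b r (\<lambda>p. A p e) y i t - diff_op a b r (\<lambda>p. A p 0) y i t) =
     (\<lambda>t. \<Sum>j\<in>{1..r}. \<Sum>k\<in>UNIV. dA j i k t * z j k t)" for i
    unfolding delta dA_def z_def ..
  have inner: "(\<lambda>t. \<Sum>k\<in>UNIV. dA j i k t * z j k t) \<in> Hoelder a b n \<alpha> \<and>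
     hnorm a b n \<alpha> (\<lambda>t. \<Sum>k\<in>UNIV. dA j i k t * z j k t) \<le> (\<Sum>k\<in>UNIV. K * hnorm a b n \<alpha> (dA j i k) * (CC ^ r * V))"
    if j: "j \<in> {1..r}" for j i
  proof -
    have "(\<lambda>t. \<Sum>k\<in>UNIV. dA j i k t * z j k t) \<in> Hoelder a b n \<alpha> \<and>
     hnorm a b n \<alpha> (\<lambda>t. \<Sum>k\<in>UNIV. dA j i k t * z j k t) \<le> (\<Sum>k\<in>UNIV. hnorm a b n \<alpha> (\<lambda>t. dA j i k t * z j k t))"
      using sum_Ho[of UNIV "\<lambda>k t. dA j i k t * z j k t" n] tH[OF j] by auto
    moreover have "(\<Sum>k\<in>UNIV. hnorm a b n \<alpha> (\<lambda>t. dA j i k t * z j k t)) \<le> (\<Sum>k\<in>UNIV. K * hnorm a b n \<alpha> (dA j i k) * (CC ^ r * V))"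
      using tH[OF j] by (intro sum_mono) auto
    ultimately show ?thesis by auto
  qed
  have outer: "(\<lambda>t. \<Sum>j\<in>{1..r}. \<Sum>k\<in>UNIV. dA j i k t * z j k t) \<in> Hoelder a b n \<alpha> \<and>
     hnorm a b n \<alpha> (\<lambda>t. \<Sum>j\<in>{1..r}. \<Sum>k\<in>UNIV. dA j i k t * z j k t) \<le> (\<Sum>j\<in>{1..r}. \<Sum>k\<in>UNIV. K * hnorm a b n \<alpha> (dA j i k) * (CC ^ r * V))" for i
  proof -
    have "(\<lambda>t. \<Sum>j\<in>{1..r}. \<Sum>k\<in>UNIV. dA j i k t * z j k t) \<in> Hoelder a b n \<alpha> \<and>
     hnorm a b n \<alpha> (\<lambda>t. \<Sum>j\<in>{1..r}. \<Sum>k\<in>UNIV. dA j i k t * z j k t) \<le> (\<Sum>j\<in>{1..r}. hnorm a b n \<alpha> (\<lambda>t. \<Sum>k\<in>UNIV. dA j i k t * z j k t))"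
      using sum_Ho[of "{1..r}" "\<lambda>j t. \<Sum>k\<in>UNIV. dA j i k t * z j k t" n] inner by auto
    moreover have "(\<Sum>j\<in>{1..r}. hnorm a b n \<alpha> (\<lambda>t. \<Sum>k\<in>UNIV. dA j i k t * z j k t)) \<le> (\<Sum>j\<in>{1..r}. \<Sum>k\<in>UNIV. K * hnorm a b n \<alpha> (dA j i k) * (CC ^ r * V))"
      using inner by (intro sum_mono) auto
    ultimately show ?thesis by auto
  qed
  have "vec_hnorm a b n \<alpha> (\<lambda>i t. diff_op a b r (\<lambda>p. A p e) y i t - diff_op a b r (\<lambda>p. A p 0) y i t)
     = (\<Sum>i\<in>UNIV. hnorm a b n \<alpha> (\<lambda>t. \<Sum>j\<in>{1..r}. \<Sum>k\<in>UNIV. dA j i k t * z j k t))"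
    unfolding vec_hnorm_def eq ..
  also have "\<dots> \<le> (\<Sum>i\<in>UNIV. \<Sum>j\<in>{1..r}. \<Sum>k\<in>UNIV. K * hnorm a b n \<alpha> (dA j i k) * (CC ^ r * V))"
    using outer by (intro sum_mono) auto
  also have "\<dots> = (\<Sum>j\<in>{1..r}. \<Sum>i\<in>UNIV. \<Sum>k\<in>UNIV. K * hnorm a b n \<alpha> (dA j i k) * (CC ^ r * V))"
    by (rule sum.swap)
  also have "\<dots> = K * CC ^ r * (\<Sum>j\<in>{1..r}. \<Sum>i\<in>UNIV. \<Sum>k\<in>UNIV. hnorm a b n \<alpha> (dA j i k)) * V"
    by (simp add: sum_distrib_left sum_distrib_right mult.assoc mult.left_commute)
  also have "\<dots> = Kp CC n * CC ^ r * (\<Sum>j\<in>{1..r}. mat_hnorm a b n \<alpha> (\<lambda>i k t. A (r - j) e i k t - A (r - j) 0 i k t)) * vec_hnorm a b (n + r) \<alpha> y"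
    unfolding K_def V_def mat_hnorm_def dA_def ..
  finally show ?thesis using outer eq by auto
qed

lemma mat_nonneg:
  "(\<And>i k. A i k \<in> Hoelder a b n \<alpha>) \<Longrightarrow> (\<And>i k. B i k \<in> Hoelder a b n \<alpha>) \<Longrightarrow>
   0 \<le> mat_hnorm a b n \<alpha> (\<lambda>i k t. A i k t - B i k t)"
  unfolding mat_hnorm_def using diff_Ho by (auto intro!: sum_nonneg hnorm_nonneg)

lemma opn:
  fixes T :: "('m::finite \<Rightarrow> real \<Rightarrow> complex) \<Rightarrow> ('m \<Rightarrow> real \<Rightarrow> complex)"
  assumes M0: "0 \<le> M" and bnd: "\<And>y::'m \<Rightarrow> real \<Rightarrow> complex. y \<in> vec_Hoelder a b (n + r) \<alpha> \<Longrightarrow> vec_hnorm a b n \<alpha> (T y) \<le> M * vec_hnorm a b (n + r) \<alpha> y"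
  shows "0 \<le> op_norm a b n r \<alpha> T" "op_norm a b n r \<alpha> T \<le> M"
    "\<And>y::'m \<Rightarrow> real \<Rightarrow> complex. y \<in> vec_Hoelder a b (n + r) \<alpha> \<Longrightarrow> vec_hnorm a b (n + r) \<alpha> y \<noteq> 0 \<Longrightarrow>
        vec_hnorm a b n \<alpha> (T y) \<le> op_norm a b n r \<alpha> T * vec_hnorm a b (n + r) \<alpha> y"
proof -
  define S where "S = {0} \<union> {vec_hnorm a b n \<alpha> (T y) / vec_hnorm a b (n + r) \<alpha> y | y::'m \<Rightarrow> real \<Rightarrow> complex.
      y \<in> vec_Hoelder a b (n + r) \<alpha> \<and> vec_hnorm a b (n + r) \<alpha> y \<noteq> 0}"
  have on: "op_norm a b n r \<alpha> T = Sup S" unfolding op_norm_def S_def ..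
  have le: "x \<le> M" if "x \<in> S" for x
  proof -
    { fix y :: "'m \<Rightarrow> real \<Rightarrow> complex" assume y: "y \<in> vec_Hoelder a b (n + r) \<alpha>" "vec_hnorm a b (n + r) \<alpha> y \<noteq> 0"
      then have "0 < vec_hnorm a b (n + r) \<alpha> y" using vec_nonneg[OF y(1)] by auto
      then have "vec_hnorm a b n \<alpha> (T y) / vec_hnorm a b (n + r) \<alpha> y \<le> M"
        using bnd[OF y(1)] by (simp add: divide_le_eq) }
    then show ?thesis using that M0 unfolding S_def by auto
  qed
  have bdd: "bdd_above S" unfolding bdd_above_def using le by blast
  show "0 \<le> op_norm a b n r \<alpha> T" unfolding on by (rule cSup_upper[OF _ bdd]) (simp add: S_def)
  show "op_norm a b n r \<alpha> T \<le> M" unfolding on by (rule cSup_least) (use le S_def in auto)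
  fix y :: "'m \<Rightarrow> real \<Rightarrow> complex" assume y: "y \<in> vec_Hoelder a b (n + r) \<alpha>" "vec_hnorm a b (n + r) \<alpha> y \<noteq> 0"
  then have p: "0 < vec_hnorm a b (n + r) \<alpha> y" using vec_nonneg[OF y(1)] by auto
  have "vec_hnorm a b n \<alpha> (T y) / vec_hnorm a b (n + r) \<alpha> y \<le> Sup S"
    by (rule cSup_upper[OF _ bdd]) (use y S_def in auto)
  then show "vec_hnorm a b n \<alpha> (T y) \<le> op_norm a b n r \<alpha> T * vec_hnorm a b (n + r) \<alpha> y"
    using p unfolding on by (simp add: divide_le_eq)
qed

end



lemma squeeze0: "eventually (\<lambda>x. 0 \<le> g x \<and> g x \<le> h x) F \<Longrightarrow> (h \<longlongrightarrow> (0::real)) F \<Longrightarrow> (g \<longlongrightarrow> 0) F"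
  by (rule tendsto_sandwich[where f="\<lambda>x. 0" and h=h]) (auto elim: eventually_mono)

context hctx begin

lemma recover:
  fixes A :: "nat \<Rightarrow> real \<Rightarrow> 'm::finite \<Rightarrow> 'm \<Rightarrow> real \<Rightarrow> complex"
  assumes hA: "\<And>\<epsilon> j. \<epsilon> \<in> {0..<\<epsilon>0} \<Longrightarrow> j \<in> {1..r} \<Longrightarrow> A (r - j) \<epsilon> \<in> mat_Hoelder a b n \<alpha>"
    and e0: "0 < \<epsilon>0"
    and c2: "\<forall>y\<in>vec_Hoelder a b (n + r) \<alpha>.
                ((\<lambda>\<epsilon>. vec_hnorm a b n \<alpha> (\<lambda>i t. diff_op a b r (\<lambda>p. A p \<epsilon>) y i t - diff_op a b r (\<lambda>p. A p 0) y i t))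
                  \<longlongrightarrow> 0) (at_right 0)"
  shows "p < r \<Longrightarrow> ((\<lambda>\<epsilon>. hnorm a b n \<alpha> (\<lambda>t. A p \<epsilon> i l t - A p 0 i l t)) \<longlongrightarrow> 0) (at_right 0)"
proof (induction p arbitrary: i l rule: less_induct)
  case (less p)
  have ev: "eventually (\<lambda>\<epsilon>. \<epsilon> \<in> {0<..<\<epsilon>0}) (at_right (0::real))" using eventually_at_right_real[OF e0] .
  have HA: "A q \<epsilon> i k \<in> Hoelder a b n \<alpha>" if "\<epsilon> \<in> {0..<\<epsilon>0}" "q < r" for \<epsilon> q i k
    using hA[OF that(1), of "r - q"] that unfolding mat_Hoelder_def by auto
  have dH: "(\<lambda>t. A q \<epsilon> i k t - A q 0 i k t) \<in> Hoelder a b n \<alpha>" if "\<epsilon> \<in> {0..<\<epsilon>0}" "q < r" for \<epsilon> q i k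
    using diff_Ho[OF HA[OF that] HA[of 0 q]] that e0 by auto
  define cc where "cc q = complex_of_nat (\<Prod>i<q. p - i)" for q
  define y where "y = (\<lambda>k::'m. P (if k = l then 1 else 0) p)"
  have yH: "y \<in> vec_Hoelder a b (n + r) \<alpha>" unfolding y_def vec_Hoelder_def using P_Ho by auto
  define L where "L \<epsilon> = (\<lambda>t. diff_op a b r (\<lambda>p. A p \<epsilon>) y i t - diff_op a b r (\<lambda>p. A p 0) y i t)" for \<epsilon>
  have LH: "L \<epsilon> \<in> Hoelder a b n \<alpha>" if "\<epsilon> \<in> {0..<\<epsilon>0}" for \<epsilon>
    using bound[where A=A and e=\<epsilon> and y=y, OF hA[OF that] hA[of 0] yH] e0 unfolding L_def by auto
  have Lt: "((\<lambda>\<epsilon>. hnorm a b n \<alpha> (L \<epsilon>)) \<longlongrightarrow> 0) (at_right 0)"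
  proof (rule squeeze0[OF _ c2[rule_format, OF yH]])
    show "\<forall>\<^sub>F \<epsilon> in at_right 0. 0 \<le> hnorm a b n \<alpha> (L \<epsilon>) \<and> hnorm a b n \<alpha> (L \<epsilon>) \<le>
       vec_hnorm a b n \<alpha> (\<lambda>i t. diff_op a b r (\<lambda>p. A p \<epsilon>) y i t - diff_op a b r (\<lambda>p. A p 0) y i t)"
      using ev
    proof (rule eventually_mono)
      fix \<epsilon> :: real assume e: "\<epsilon> \<in> {0<..<\<epsilon>0}"
      then have all: "\<forall>i. (\<lambda>t. diff_op a b r (\<lambda>p. A p \<epsilon>) y i t - diff_op a b r (\<lambda>p. A p 0) y i t) \<in> Hoelder a b n \<alpha>"
        using bound[where A=A and e=\<epsilon> and y=y, OF hA hA[of 0] yH] e0 by auto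
      show "0 \<le> hnorm a b n \<alpha> (L \<epsilon>) \<and> hnorm a b n \<alpha> (L \<epsilon>) \<le>
       vec_hnorm a b n \<alpha> (\<lambda>i t. diff_op a b r (\<lambda>p. A p \<epsilon>) y i t - diff_op a b r (\<lambda>p. A p 0) y i t)"
        unfolding vec_hnorm_def L_def using all
        by (auto intro!: hnorm_nonneg member_le_sum[where f="\<lambda>i. hnorm a b n \<alpha> (\<lambda>t. diff_op a b r (\<lambda>p. A p \<epsilon>) y i t - diff_op a b r (\<lambda>p. A p 0) y i t)"])
    qed
  qed
  define g where "g j \<epsilon> = (\<lambda>t. (A (r - j) \<epsilon> i l t - A (r - j) 0 i l t) * P (cc (r - j)) (p - (r - j)) t)" for j \<epsilon>
  have Lg: "L \<epsilon> t = (\<Sum>j\<in>{1..r}. g j \<epsilon> t)" if t: "t \<in> {a..b}" for \<epsilon> t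
  proof -
    have "(\<Sum>k\<in>UNIV. (A (r - j) \<epsilon> i k t - A (r - j) 0 i k t) * hder a b (r - j) (y k) t) = g j \<epsilon> t" for j
    proof -
      have "(A (r - j) \<epsilon> i k t - A (r - j) 0 i k t) * hder a b (r - j) (y k) t = (if k = l then g j \<epsilon> t else 0)" for k
        unfolding y_def using hder_P[OF t] by (auto simp: P_def g_def cc_def)
      then show ?thesis by simp
    qed
    then show ?thesis unfolding L_def delta by simp
  qed
  define j0 where "j0 = r - p"
  have j0: "j0 \<in> {1..r}" "r - j0 = p" using less.prems by (auto simp: j0_def)
  have cc0: "cc p \<noteq> 0" unfolding cc_def by (simp add: prod_zero_iff)
  have g0: "g j0 \<epsilon> t = (A p \<epsilon> i l t - A p 0 i l t) * cc p" for \<epsilon> t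
    unfolding g_def j0(2) by (simp add: P_def)
  define J where "J = {1..r} - {j0}"
  have gJ: "((\<lambda>\<epsilon>. hnorm a b n \<alpha> (g j \<epsilon>)) \<longlongrightarrow> 0) (at_right 0) \<and>
      (\<forall>\<epsilon>\<in>{0..<\<epsilon>0}. g j \<epsilon> \<in> Hoelder a b n \<alpha>)" if j: "j \<in> J" for j
  proof (cases "r - j < p")
    case True
    note IH = less.IH[OF True, of i l]
    have rj: "r - j < r" using True less.prems by linarith
    have gH: "g j \<epsilon> \<in> Hoelder a b n \<alpha> \<and> hnorm a b n \<alpha> (g j \<epsilon>) \<le>
       Kp CC n * hnorm a b n \<alpha> (\<lambda>t. A (r - j) \<epsilon> i l t - A (r - j) 0 i l t) * hnorm a b n \<alpha> (P (cc (r - j)) (p - (r - j)))"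
      if "\<epsilon> \<in> {0..<\<epsilon>0}" for \<epsilon>
      unfolding g_def using mult_Ho[OF dH[OF that rj] P_Ho] by auto
    have "((\<lambda>\<epsilon>. hnorm a b n \<alpha> (g j \<epsilon>)) \<longlongrightarrow> 0) (at_right 0)"
    proof (rule squeeze0)
      show "((\<lambda>\<epsilon>. Kp CC n * hnorm a b n \<alpha> (\<lambda>t. A (r - j) \<epsilon> i l t - A (r - j) 0 i l t) * hnorm a b n \<alpha> (P (cc (r - j)) (p - (r - j)))) \<longlongrightarrow> 0) (at_right 0)"
        by (intro tendsto_mult_left_zero tendsto_mult_right_zero less.IH[OF True rj])
      show "\<forall>\<^sub>F \<epsilon> in at_right 0. 0 \<le> hnorm a b n \<alpha> (g j \<epsilon>) \<and> hnorm a b n \<alpha> (g j \<epsilon>) \<le>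
         Kp CC n * hnorm a b n \<alpha> (\<lambda>t. A (r - j) \<epsilon> i l t - A (r - j) 0 i l t) * hnorm a b n \<alpha> (P (cc (r - j)) (p - (r - j)))"
        using ev by (rule eventually_mono) (use gH hnorm_nonneg in auto)
    qed
    then show ?thesis using gH by auto
  next
    case False
    then have "r - j \<noteq> p" using j j0 unfolding J_def by auto
    with False have "p < r - j" by auto
    then have "cc (r - j) = 0" unfolding cc_def by (auto simp: prod_zero_iff intro!: bexI[of _ p])
    then have "g j \<epsilon> = (\<lambda>t. 0)" for \<epsilon> unfolding g_def by (auto simp: P_def)
    then show ?thesis using zero_Ho by simp
  qed
  have finJ: "finite J" by (simp add: J_def)
  define ci where "ci = inverse (cc p)"
  have key: "A p \<epsilon> i l t - A p 0 i l t = (L \<epsilon> t - (\<Sum>j\<in>J. g j \<epsilon> t)) * P ci 0 t" if t: "t \<in> {a..b}" for \<epsilon> t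
  proof -
    have "L \<epsilon> t = g j0 \<epsilon> t + (\<Sum>j\<in>J. g j \<epsilon> t)"
      unfolding Lg[OF t] J_def using j0(1) by (simp add: sum.remove)
    then show ?thesis unfolding g0 ci_def using cc0 by (simp add: P_def)
  qed
  show ?case
  proof (rule squeeze0)
    show "((\<lambda>\<epsilon>. Kp CC n * (hnorm a b n \<alpha> (L \<epsilon>) + (\<Sum>j\<in>J. hnorm a b n \<alpha> (g j \<epsilon>))) * hnorm a b n \<alpha> (P ci 0)) \<longlongrightarrow> 0) (at_right 0)"
      using Lt gJ by (intro tendsto_mult_left_zero tendsto_mult_right_zero tendsto_add_zero tendsto_null_sum) auto
    show "\<forall>\<^sub>F \<epsilon> in at_right 0. 0 \<le> hnorm a b n \<alpha> (\<lambda>t. A p \<epsilon> i l t - A p 0 i l t) \<and>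
       hnorm a b n \<alpha> (\<lambda>t. A p \<epsilon> i l t - A p 0 i l t) \<le> Kp CC n * (hnorm a b n \<alpha> (L \<epsilon>) + (\<Sum>j\<in>J. hnorm a b n \<alpha> (g j \<epsilon>))) * hnorm a b n \<alpha> (P ci 0)"
      using ev
    proof (rule eventually_mono)
      fix \<epsilon> :: real assume e: "\<epsilon> \<in> {0<..<\<epsilon>0}"
      then have e': "\<epsilon> \<in> {0..<\<epsilon>0}" by auto
      have s: "(\<lambda>t. \<Sum>j\<in>J. g j \<epsilon> t) \<in> Hoelder a b n \<alpha> \<and> hnorm a b n \<alpha> (\<lambda>t. \<Sum>j\<in>J. g j \<epsilon> t) \<le> (\<Sum>j\<in>J. hnorm a b n \<alpha> (g j \<epsilon>))"
        using sum_Ho[OF finJ, of "\<lambda>j. g j \<epsilon>" n] gJ e' by auto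
      have d: "(\<lambda>t. L \<epsilon> t - (\<Sum>j\<in>J. g j \<epsilon> t)) \<in> Hoelder a b n \<alpha> \<and>
          hnorm a b n \<alpha> (\<lambda>t. L \<epsilon> t - (\<Sum>j\<in>J. g j \<epsilon> t)) \<le> hnorm a b n \<alpha> (L \<epsilon>) + hnorm a b n \<alpha> (\<lambda>t. \<Sum>j\<in>J. g j \<epsilon> t)"
        using diff_Ho[OF LH[OF e'] conjunct1[OF s]] by simp
      have m: "(\<lambda>t. (L \<epsilon> t - (\<Sum>j\<in>J. g j \<epsilon> t)) * P ci 0 t) \<in> Hoelder a b n \<alpha> \<and>
          hnorm a b n \<alpha> (\<lambda>t. (L \<epsilon> t - (\<Sum>j\<in>J. g j \<epsilon> t)) * P ci 0 t) \<le>
          Kp CC n * hnorm a b n \<alpha> (\<lambda>t. L \<epsilon> t - (\<Sum>j\<in>J. g j \<epsilon> t)) * hnorm a b n \<alpha> (P ci 0)"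
        using mult_Ho[OF conjunct1[OF d] P_Ho] .
      have eqn: "hnorm a b n \<alpha> (\<lambda>t. A p \<epsilon> i l t - A p 0 i l t) = hnorm a b n \<alpha> (\<lambda>t. (L \<epsilon> t - (\<Sum>j\<in>J. g j \<epsilon> t)) * P ci 0 t)"
        using Ho_cong[of "\<lambda>t. A p \<epsilon> i l t - A p 0 i l t" "\<lambda>t. (L \<epsilon> t - (\<Sum>j\<in>J. g j \<epsilon> t)) * P ci 0 t" n] key by auto
      have K0: "0 \<le> Kp CC n" using Kp_ge1[of CC n] CC_ge1 by simp
      have P0: "0 \<le> hnorm a b n \<alpha> (P ci 0)" using hnorm_nonneg[OF P_Ho] .
      have "Kp CC n * hnorm a b n \<alpha> (\<lambda>t. L \<epsilon> t - (\<Sum>j\<in>J. g j \<epsilon> t)) * hnorm a b n \<alpha> (P ci 0)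
         \<le> Kp CC n * (hnorm a b n \<alpha> (L \<epsilon>) + (\<Sum>j\<in>J. hnorm a b n \<alpha> (g j \<epsilon>))) * hnorm a b n \<alpha> (P ci 0)"
        using d s K0 P0 by (intro mult_right_mono mult_left_mono) auto
      then show "0 \<le> hnorm a b n \<alpha> (\<lambda>t. A p \<epsilon> i l t - A p 0 i l t) \<and>
       hnorm a b n \<alpha> (\<lambda>t. A p \<epsilon> i l t - A p 0 i l t) \<le> Kp CC n * (hnorm a b n \<alpha> (L \<epsilon>) + (\<Sum>j\<in>J. hnorm a b n \<alpha> (g j \<epsilon>))) * hnorm a b n \<alpha> (P ci 0)"
        using eqn m hnorm_nonneg[OF conjunct1[OF m]] by linarith
    qed
  qed
qed

end



theorem theorem2:
  fixes a b \<alpha> \<epsilon>0 :: real and r n :: nat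
    and A :: "nat \<Rightarrow> real \<Rightarrow> 'm::finite \<Rightarrow> 'm \<Rightarrow> real \<Rightarrow> complex"
  assumes "a < b" and "r \<ge> 2" and "0 < \<alpha>" and "\<alpha> \<le> 1" and "\<epsilon>0 > 0"
    and "\<And>\<epsilon> j. \<epsilon> \<in> {0..<\<epsilon>0} \<Longrightarrow> j \<in> {1..r} \<Longrightarrow> A (r - j) \<epsilon> \<in> mat_Hoelder a b n \<alpha>"
  shows "((\<forall>j\<in>{1..r}. ((\<lambda>\<epsilon>. mat_hnorm a b n \<alpha> (\<lambda>i k t. A (r - j) \<epsilon> i k t - A (r - j) 0 i k t))
               \<longlongrightarrow> 0) (at_right 0))
          \<longleftrightarrow> ((\<lambda>\<epsilon>. op_norm a b n r \<alpha> (\<lambda>y. \<lambda>i t. diff_op a b r (\<lambda>p. A p \<epsilon>) y i t - diff_op a b r (\<lambda>p. A p 0) y i t))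
               \<longlongrightarrow> 0) (at_right 0))
       \<and> (((\<lambda>\<epsilon>. op_norm a b n r \<alpha> (\<lambda>y. \<lambda>i t. diff_op a b r (\<lambda>p. A p \<epsilon>) y i t - diff_op a b r (\<lambda>p. A p 0) y i t))
               \<longlongrightarrow> 0) (at_right 0)
          \<longleftrightarrow> (\<forall>y\<in>vec_Hoelder a b (n + r) \<alpha>.
                ((\<lambda>\<epsilon>. vec_hnorm a b n \<alpha> (\<lambda>i t. diff_op a b r (\<lambda>p. A p \<epsilon>) y i t - diff_op a b r (\<lambda>p. A p 0) y i t))
                  \<longlongrightarrow> 0) (at_right 0)))"
proof -
  interpret hctx a b \<alpha> using assms by unfold_locales auto
  have e0: "0 < \<epsilon>0" using assms by auto
  note hA = assms(6)
  have ev: "eventually (\<lambda>\<epsilon>. \<epsilon> \<in> {0<..<\<epsilon>0}) (at_right (0::real))" using eventually_at_right_real[OF e0] .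
  have A0: "A (r - j) 0 \<in> mat_Hoelder a b n \<alpha>" if "j \<in> {1..r}" for j using hA[OF _ that] e0 by auto
  define KK where "KK = Kp CC n * CC ^ r"
  have KK0: "0 \<le> KK" using Kp_ge1[of CC n] CC_ge1 unfolding KK_def by simp
  define SA where "SA \<epsilon> = (\<Sum>j\<in>{1..r}. mat_hnorm a b n \<alpha> (\<lambda>i k t. A (r - j) \<epsilon> i k t - A (r - j) 0 i k t))" for \<epsilon>
  define ON where "ON \<epsilon> = op_norm a b n r \<alpha> (\<lambda>y. \<lambda>i t. diff_op a b r (\<lambda>p. A p \<epsilon>) y i t - diff_op a b r (\<lambda>p. A p 0) y i t)" for \<epsilon>
  define VN where "VN \<epsilon> y = vec_hnorm a b n \<alpha> (\<lambda>i t. diff_op a b r (\<lambda>p. A p \<epsilon>) y i t - diff_op a b r (\<lambda>p. A p 0) y i t)" for \<epsilon> y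
  have bnd: "(\<forall>i. (\<lambda>t. diff_op a b r (\<lambda>p. A p \<epsilon>) y i t - diff_op a b r (\<lambda>p. A p 0) y i t) \<in> Hoelder a b n \<alpha>) \<and>
      VN \<epsilon> y \<le> KK * SA \<epsilon> * vec_hnorm a b (n + r) \<alpha> y"
    if "\<epsilon> \<in> {0..<\<epsilon>0}" "y \<in> vec_Hoelder a b (n + r) \<alpha>" for \<epsilon> y
    using bound[where A=A and e=\<epsilon> and y=y, OF hA[OF that(1)] A0 that(2)] unfolding KK_def SA_def VN_def by auto
  have VN0: "0 \<le> VN \<epsilon> y" if "\<epsilon> \<in> {0..<\<epsilon>0}" "y \<in> vec_Hoelder a b (n + r) \<alpha>" for \<epsilon> y
    using bnd[OF that] unfolding VN_def vec_hnorm_def by (auto intro!: sum_nonneg hnorm_nonneg)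
  have SA0: "0 \<le> SA \<epsilon>" if "\<epsilon> \<in> {0..<\<epsilon>0}" for \<epsilon>
    unfolding SA_def using hA[OF that] A0 unfolding mat_Hoelder_def
    by (intro sum_nonneg mat_nonneg) auto
  have op: "0 \<le> ON \<epsilon> \<and> ON \<epsilon> \<le> KK * SA \<epsilon> \<and> (\<forall>y\<in>vec_Hoelder a b (n + r) \<alpha>. VN \<epsilon> y \<le> ON \<epsilon> * vec_hnorm a b (n + r) \<alpha> y)"
    if e: "\<epsilon> \<in> {0..<\<epsilon>0}" for \<epsilon>
  proof -
    have M0: "0 \<le> KK * SA \<epsilon>" using KK0 SA0[OF e] by simp
    have b: "\<And>y::'m \<Rightarrow> real \<Rightarrow> complex. y \<in> vec_Hoelder a b (n + r) \<alpha> \<Longrightarrow>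
       vec_hnorm a b n \<alpha> ((\<lambda>y. \<lambda>i t. diff_op a b r (\<lambda>p. A p \<epsilon>) y i t - diff_op a b r (\<lambda>p. A p 0) y i t) y) \<le> KK * SA \<epsilon> * vec_hnorm a b (n + r) \<alpha> y"
      using bnd[OF e] unfolding VN_def by auto
    have o1: "0 \<le> ON \<epsilon>" unfolding ON_def by (rule opn(1)[OF M0]) (use b in auto)
    have o2: "ON \<epsilon> \<le> KK * SA \<epsilon>" unfolding ON_def by (rule opn(2)[OF M0]) (use b in auto)
    have "VN \<epsilon> y \<le> ON \<epsilon> * vec_hnorm a b (n + r) \<alpha> y" if y: "y \<in> vec_Hoelder a b (n + r) \<alpha>" for y :: "'m \<Rightarrow> real \<Rightarrow> complex"
    proof (cases "vec_hnorm a b (n + r) \<alpha> y = 0")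
      case True
      then show ?thesis using bnd[OF e y] by simp
    next
      case False
      show ?thesis unfolding VN_def ON_def by (rule opn(3)[OF M0]) (use b y False in auto)
    qed
    then show ?thesis using o1 o2 by auto
  qed
  have I_c1: "(ON \<longlongrightarrow> 0) (at_right 0)" if I: "\<forall>j\<in>{1..r}. ((\<lambda>\<epsilon>. mat_hnorm a b n \<alpha> (\<lambda>i k t. A (r - j) \<epsilon> i k t - A (r - j) 0 i k t)) \<longlongrightarrow> 0) (at_right 0)"
  proof (rule squeeze0)
    show "((\<lambda>\<epsilon>. KK * SA \<epsilon>) \<longlongrightarrow> 0) (at_right 0)"
      unfolding SA_def using I by (intro tendsto_mult_right_zero tendsto_null_sum) auto
    show "\<forall>\<^sub>F \<epsilon> in at_right 0. 0 \<le> ON \<epsilon> \<and> ON \<epsilon> \<le> KK * SA \<epsilon>"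
      using ev by (rule eventually_mono) (use op in auto)
  qed
  have c1_c2: "\<forall>y\<in>vec_Hoelder a b (n + r) \<alpha>. ((\<lambda>\<epsilon>. VN \<epsilon> y) \<longlongrightarrow> 0) (at_right 0)" if c1: "(ON \<longlongrightarrow> 0) (at_right 0)"
  proof
    fix y :: "'m \<Rightarrow> real \<Rightarrow> complex" assume y: "y \<in> vec_Hoelder a b (n + r) \<alpha>"
    show "((\<lambda>\<epsilon>. VN \<epsilon> y) \<longlongrightarrow> 0) (at_right 0)"
    proof (rule squeeze0)
      show "((\<lambda>\<epsilon>. ON \<epsilon> * vec_hnorm a b (n + r) \<alpha> y) \<longlongrightarrow> 0) (at_right 0)"
        using c1 by (rule tendsto_mult_left_zero)
      show "\<forall>\<^sub>F \<epsilon> in at_right 0. 0 \<le> VN \<epsilon> y \<and> VN \<epsilon> y \<le> ON \<epsilon> * vec_hnorm a b (n + r) \<alpha> y"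
        using ev by (rule eventually_mono) (use op VN0 y in auto)
    qed
  qed
  have c2_I: "\<forall>j\<in>{1..r}. ((\<lambda>\<epsilon>. mat_hnorm a b n \<alpha> (\<lambda>i k t. A (r - j) \<epsilon> i k t - A (r - j) 0 i k t)) \<longlongrightarrow> 0) (at_right 0)"
    if c2: "\<forall>y\<in>vec_Hoelder a b (n + r) \<alpha>. ((\<lambda>\<epsilon>. VN \<epsilon> y) \<longlongrightarrow> 0) (at_right 0)"
  proof
    fix j assume j: "j \<in> {1..r}"
    have rj: "r - j < r" using j by auto
    have "((\<lambda>\<epsilon>. hnorm a b n \<alpha> (\<lambda>t. A (r - j) \<epsilon> i k t - A (r - j) 0 i k t)) \<longlongrightarrow> 0) (at_right 0)" for i k
      using recover[where A=A, OF hA e0 c2[unfolded VN_def] rj] by simp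
    then show "((\<lambda>\<epsilon>. mat_hnorm a b n \<alpha> (\<lambda>i k t. A (r - j) \<epsilon> i k t - A (r - j) 0 i k t)) \<longlongrightarrow> 0) (at_right 0)"
      unfolding mat_hnorm_def by (intro tendsto_null_sum) auto
  qed
  have "(\<forall>j\<in>{1..r}. ((\<lambda>\<epsilon>. mat_hnorm a b n \<alpha> (\<lambda>i k t. A (r - j) \<epsilon> i k t - A (r - j) 0 i k t)) \<longlongrightarrow> 0) (at_right 0))
      \<longleftrightarrow> (ON \<longlongrightarrow> 0) (at_right 0)"
    using I_c1 c1_c2 c2_I by blast
  moreover have "(ON \<longlongrightarrow> 0) (at_right 0) \<longleftrightarrow> (\<forall>y\<in>vec_Hoelder a b (n + r) \<alpha>. ((\<lambda>\<epsilon>. VN \<epsilon> y) \<longlongrightarrow> 0) (at_right 0))"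
    using I_c1 c1_c2 c2_I by blast
  ultimately show ?thesis unfolding ON_def[abs_def] VN_def[abs_def] by simp
qed


end
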